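(* In the Haechi protocol (described in the context), assume the beacon shard has fewer than one third Byzantine nodes. For any two OTXs $OTX^1$ and $OTX^2$ received by the beacon chain, contained in CrossLinks $CL_1$ and $CL_2$ respectively, if either (i) $CL_1.blockTS < CL_2.blockTS$, or (ii) $CL_1 = CL_2$ and $f_{idx}(OTX^1) < f_{idx}(OTX^2)$, then Haechi orders $OTX^1$ before $OTX^2$ in the ordering phase (even if the beacon chain's leader is malicious).
   Context: Setting (Haechi). A sharded blockchain has shards $S_1,\dots,S_m$; shard $S_i$ maintains a chain $SC_i$ of blocks, $SC_i^h$ being the block at height $h$. Each block carries a publicly verifiable block timestamp, strictly increasing in block height within each shard. A beacon shard $S_0$ maintains a beacon chain via a leader-based BFT consensus. Transactions calling order-sensitive contracts are called OTXs. When shard $S_i$ handles its block at height $h$, it puts the valid new OTXs of the block, in in-block order, into a list $L_{tx}$ and sends the beacon chain a certified CrossLink $CL=\langle blockTS, L_{tx}, i, h\rangle$. $f_{idx}(\cdot)$ returns the index of a transaction within its block/CrossLink. Ordering phase: the beacon chain keeps for each shard $i$ a sequence $shardCLs[i]$ of received CrossLinks of $S_i$ with consecutive heights (CrossLinks arriving with a height gap are buffered until the gap is filled); $shardLastTS[i]$ is the timestamp of the last CrossLink in $shardCLs[i]$. Once every $shardCLs[i]$ is nonempty, an ordering cycle selects all CrossLinks in $shardCLs$ with $blockTS\le\min_i shardLastTS[i]$ and orders their OTXs by smaller block timestamp first, then by smaller index within the same CrossLink; the proposed order is accepted only through the beacon shard's BFT consensus, whose honest nodes check these rules. *)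

theory Defs
  imports Complex_Main
begin

(* A block / CrossLink is identified by (i, h): shard i, height h
   (heights start at 0).  ts i h is the (certified) block timestamp of SC_i^h and
   cnt i h the number of valid new OTXs in L_tx of that block.
   An OTX is identified by (i, h, j): the j-th entry of L_tx of CrossLink (i, h),
   so f_idx (i, h, j) = j and its CrossLink's blockTS is ts i h. *)

type_synonym cl = "nat \<times> nat"
type_synonym otx = "nat \<times> nat \<times> nat"

definition cl_of :: "otx \<Rightarrow> cl" where
  "cl_of x = (fst x, fst (snd x))"

definition f_idx :: "otx \<Rightarrow> nat" where
  "f_idx x = snd (snd x)"

definition blockTS :: "(nat \<Rightarrow> nat \<Rightarrow> real) \<Rightarrow> cl \<Rightarrow> real" where
  "blockTS ts c = ts (fst c) (snd c)"

definition otxs_of :: "(nat \<Rightarrow> nat \<Rightarrow> nat) \<Rightarrow> cl \<Rightarrow> otx set" where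
  "otxs_of cnt c = {(fst c, snd c, j) | j. j < cnt (fst c) (snd c)}"

(* shardCLs[i]: heights of received CrossLinks of shard i that are not yet ordered
   and lie in the consecutive-height run received so far (from height 0);
   R = set of received CrossLinks, P = CrossLinks already ordered. *)
definition shardCLs :: "cl set \<Rightarrow> cl set \<Rightarrow> nat \<Rightarrow> nat set" where
  "shardCLs R P i = {h. (\<forall>h'\<le>h. (i, h') \<in> R) \<and> (i, h) \<notin> P}"

definition shardLastTS :: "(nat \<Rightarrow> nat \<Rightarrow> real) \<Rightarrow> cl set \<Rightarrow> cl set \<Rightarrow> nat \<Rightarrow> real" where
  "shardLastTS ts R P i = ts i (Max (shardCLs R P i))"

definition order_ok :: "(nat \<Rightarrow> nat \<Rightarrow> real) \<Rightarrow> otx \<Rightarrow> otx \<Rightarrow> bool" where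
  "order_ok ts a b \<longleftrightarrow>
     blockTS ts (cl_of a) < blockTS ts (cl_of b) \<or>
     (blockTS ts (cl_of a) = blockTS ts (cl_of b) \<and>
        (cl_of a = cl_of b \<longrightarrow> f_idx a < f_idx b))"

(* The check an honest beacon node performs on a proposal (S, L) for an ordering
   cycle: S is the set of selected CrossLinks, L the proposed order of their OTXs. *)
definition valid_cycle ::
  "nat \<Rightarrow> (nat \<Rightarrow> nat \<Rightarrow> real) \<Rightarrow> (nat \<Rightarrow> nat \<Rightarrow> nat) \<Rightarrow> cl set \<Rightarrow> cl set
     \<Rightarrow> cl set \<times> otx list \<Rightarrow> bool" where
  "valid_cycle m ts cnt R P props \<longleftrightarrow>
     (\<forall>i\<in>{1..m}. shardCLs R P i \<noteq> {}) \<and>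
     fst props = {(i, h). i \<in> {1..m} \<and> h \<in> shardCLs R P i \<and>
                         ts i h \<le> (MIN i'\<in>{1..m}. shardLastTS ts R P i')} \<and>
     set (snd props) = (\<Union>c\<in>fst props. otxs_of cnt c) \<and>
     distinct (snd props) \<and>
     sorted_wrt (order_ok ts) (snd props)"

definition ordered_before :: "(nat \<Rightarrow> cl set \<times> otx list) \<Rightarrow> nat \<Rightarrow> cl set" where
  "ordered_before props k = (\<Union>k'<k. fst (props k'))"

definition output_log :: "(nat \<Rightarrow> cl set \<times> otx list) \<Rightarrow> nat \<Rightarrow> otx list" where
  "output_log props K = concat (map (\<lambda>k. snd (props k)) [0..<K])"

end

theory Submission imports Defs begin
lemma concat_order:
  fixes f :: "nat \<Rightarrow> 'a list"
  assumes A: "\<And>k k'. k < K \<Longrightarrow> k' < K \<Longrightarrow> a \<in> set (f k) \<Longrightarrow> b \<in> set (f k') \<Longrightarrow> k \<le> k'"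
    and B: "\<And>k i j. k < K \<Longrightarrow> i < length (f k) \<Longrightarrow> j < length (f k) \<Longrightarrow>
              f k ! i = a \<Longrightarrow> f k ! j = b \<Longrightarrow> i < j"
  shows "p < length (concat (map f [0..<K])) \<Longrightarrow> q < length (concat (map f [0..<K])) \<Longrightarrow>
         concat (map f [0..<K]) ! p = a \<Longrightarrow> concat (map f [0..<K]) ! q = b \<Longrightarrow> p < q"
  using A B
proof (induction K arbitrary: p q)
  case 0
  then show ?case by simp
next
  case (Suc K)
  let ?xs = "concat (map f [0..<K])"
  have eq: "concat (map f [0..<Suc K]) = ?xs @ f K" by simp
  have A': "\<And>k k'. k < Suc K \<Longrightarrow> k' < Suc K \<Longrightarrow> a \<in> set (f k) \<Longrightarrow> b \<in> set (f k') \<Longrightarrow> k \<le> k'"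
    by (rule Suc.prems(5))
  have B': "\<And>k i j. k < Suc K \<Longrightarrow> i < length (f k) \<Longrightarrow> j < length (f k) \<Longrightarrow>
              f k ! i = a \<Longrightarrow> f k ! j = b \<Longrightarrow> i < j"
    by (rule Suc.prems(6))
  have P1: "p < length (?xs @ f K)" and Q1: "q < length (?xs @ f K)"
    and P3: "(?xs @ f K) ! p = a" and Q3: "(?xs @ f K) ! q = b"
    using Suc.prems(1-4) unfolding eq by auto
  show ?case
  proof (cases "p < length ?xs")
    case p: True
    show ?thesis
    proof (cases "q < length ?xs")
      case True
      have "?xs ! p = a" using p P3 by (simp add: nth_append)
      moreover have "?xs ! q = b" using True Q3 by (simp add: nth_append)
      ultimately show ?thesis
        using Suc.IH[of p q] p True A' B' by (meson less_SucI)
    next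
      case False
      then show ?thesis using p by simp
    qed
  next
    case p: False
    show ?thesis
    proof (cases "q < length ?xs")
      case True
      have "?xs ! q = b" using True Q3 by (simp add: nth_append)
      then have "b \<in> set ?xs" using True nth_mem by metis
      then obtain k' where k': "k' < K" "b \<in> set (f k')" by auto
      have "f K ! (p - length ?xs) = a" using p P3 by (simp add: nth_append)
      moreover have "p - length ?xs < length (f K)" using p P1 by simp
      ultimately have "a \<in> set (f K)" using nth_mem by metis
      then have "K \<le> k'" using A'[of K k'] k' by simp
      then show ?thesis using k' by simp
    next
      case False
      have "f K ! (p - length ?xs) = a" using p P3 by (simp add: nth_append)
      moreover have "p - length ?xs < length (f K)" using p P1 by simp
      moreover have "f K ! (q - length ?xs) = b" using False Q3 by (simp add: nth_append)
      moreover have "q - length ?xs < length (f K)" using False Q1 by simp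
      ultimately have "p - length ?xs < q - length ?xs"
        using B'[of K] by blast
      then show ?thesis by simp
    qed
  qed
qed
lemma otxs_of_cl: "x \<in> otxs_of cnt c \<Longrightarrow> cl_of x = c"
  by (auto simp: otxs_of_def cl_of_def)

theorem lemma2:
  fixes m :: nat
    and ts :: "nat \<Rightarrow> nat \<Rightarrow> real"
    and cnt :: "nat \<Rightarrow> nat \<Rightarrow> nat"
    and nodes byz :: "'node set"
    and recv :: "nat \<Rightarrow> cl set"
    and props :: "nat \<Rightarrow> cl set \<times> otx list"
    and votes :: "nat \<Rightarrow> 'node set"
    and K :: nat
    and otx1 otx2 :: otx
  assumes m_pos: "m \<ge> 1"
    and ts_mono: "\<And>i. i \<in> {1..m} \<Longrightarrow> strict_mono (ts i)"
    and recv_fin: "\<And>k. finite (recv k)"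
    and recv_genuine: "\<And>k. recv k \<subseteq> {1..m} \<times> UNIV"
    and recv_mono: "\<And>k. recv k \<subseteq> recv (Suc k)"
    and nodes_fin: "finite nodes"
    and byz_sub: "byz \<subseteq> nodes"
    and byz_bound: "3 * card byz < card nodes"
    and votes_sub: "\<And>k. k < K \<Longrightarrow> votes k \<subseteq> nodes"
    and quorum: "\<And>k. k < K \<Longrightarrow> 3 * card (votes k) > 2 * card nodes"
    and honest_check: "\<And>k v. k < K \<Longrightarrow> v \<in> votes k - byz \<Longrightarrow>
            valid_cycle m ts cnt (recv k) (ordered_before props k) (props k)"
    and otx1_recv: "cl_of otx1 \<in> recv K" "otx1 \<in> otxs_of cnt (cl_of otx1)"
    and otx2_recv: "cl_of otx2 \<in> recv K" "otx2 \<in> otxs_of cnt (cl_of otx2)"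
    and rule: "blockTS ts (cl_of otx1) < blockTS ts (cl_of otx2) \<or>
               (cl_of otx1 = cl_of otx2 \<and> f_idx otx1 < f_idx otx2)"
  shows "otx2 \<in> set (output_log props K) \<longrightarrow>
           otx1 \<in> set (output_log props K) \<and>
           (\<forall>p q. p < length (output_log props K) \<and> q < length (output_log props K) \<and>
                  output_log props K ! p = otx1 \<and> output_log props K ! q = otx2 \<longrightarrow> p < q)"
proof -
  have V: "valid_cycle m ts cnt (recv k) (ordered_before props k) (props k)" if k: "k < K" for k
  proof -
    have "\<not> votes k \<subseteq> byz"
    proof
      assume "votes k \<subseteq> byz"
      then have "card (votes k) \<le> card byz"
        using byz_sub nodes_fin by (meson card_mono finite_subset)
      then show False using quorum[OF k] byz_bound by linarith
    qed
    then obtain v where "v \<in> votes k - byz" by blast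
    then show ?thesis using honest_check[OF k] by blast
  qed
  define S where "S k = fst (props k)" for k
  define L where "L k = snd (props k)" for k
  have Sdef: "S k = {(i, h). i \<in> {1..m} \<and> h \<in> shardCLs (recv k) (ordered_before props k) i \<and>
                         ts i h \<le> (MIN i'\<in>{1..m}. shardLastTS ts (recv k) (ordered_before props k) i')}"
    and nonempty: "\<forall>i\<in>{1..m}. shardCLs (recv k) (ordered_before props k) i \<noteq> {}"
    and Lset: "set (L k) = (\<Union>c\<in>S k. otxs_of cnt c)"
    and Ldist: "distinct (L k)"
    and Lsort: "sorted_wrt (order_ok ts) (L k)"
    if "k < K" for k
    using V[OF that] unfolding valid_cycle_def S_def L_def by auto
  have log: "output_log props K = concat (map L [0..<K])"
    unfolding output_log_def L_def by simp
  have D: "k = k'" if "k < K" "k' < K" "c \<in> S k" "c \<in> S k'" for k k' c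
  proof (rule ccontr)
    assume "k \<noteq> k'"
    then consider "k < k'" | "k' < k" by linarith
    then show False
    proof cases
      case 1
      have "c \<in> ordered_before props k'" using 1 that(3) unfolding ordered_before_def S_def by auto
      then show False using that(4) Sdef[OF that(2)] by (auto simp: shardCLs_def)
    next
      case 2
      have "c \<in> ordered_before props k" using 2 that(4) unfolding ordered_before_def S_def by auto
      then show False using that(3) Sdef[OF that(1)] by (auto simp: shardCLs_def)
    qed
  qed
  have Key: "\<exists>k1\<le>k2. cl_of otx1 \<in> S k1" if k2: "k2 < K" and c2: "cl_of otx2 \<in> S k2" for k2
  proof (cases "cl_of otx1 = cl_of otx2")
    case True
    then show ?thesis using c2 by auto
  next
    case False
    with rule have lt: "blockTS ts (cl_of otx1) < blockTS ts (cl_of otx2)" by auto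
    obtain i1 h1 where c1: "cl_of otx1 = (i1, h1)" by fastforce
    obtain i2 h2 where c2e: "cl_of otx2 = (i2, h2)" by fastforce
    let ?R = "recv k2" and ?P = "ordered_before props k2"
    let ?T = "MIN i'\<in>{1..m}. shardLastTS ts ?R ?P i'"
    have i1: "i1 \<in> {1..m}" using otx1_recv(1) recv_genuine[of K] c1 by auto
    have le2: "ts i2 h2 \<le> ?T" using c2 c2e Sdef[OF k2] by auto
    have "?T \<le> shardLastTS ts ?R ?P i1" using i1 by (intro Min_le) auto
    define hm where "hm = Max (shardCLs ?R ?P i1)"
    have fin: "finite (shardCLs ?R ?P i1)"
    proof (rule finite_subset)
      show "shardCLs ?R ?P i1 \<subseteq> snd ` ?R"
        unfolding shardCLs_def by (auto intro: rev_image_eqI[of "(i1, _)"])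
      show "finite (snd ` ?R)" using recv_fin by simp
    qed
    have "shardCLs ?R ?P i1 \<noteq> {}" using nonempty[OF k2] i1 by auto
    then have hm_in: "hm \<in> shardCLs ?R ?P i1" unfolding hm_def using fin by (rule Max_in[rotated])
    have "ts i1 h1 < ts i1 hm"
      using lt le2 \<open>?T \<le> _\<close> c1 c2e unfolding blockTS_def shardLastTS_def hm_def by auto
    then have "h1 < hm" using ts_mono[OF i1]
      by (metis not_less strict_mono_less_eq)
    then have inR: "(i1, h1) \<in> ?R" using hm_in unfolding shardCLs_def by auto
    show ?thesis
    proof (cases "(i1, h1) \<in> ?P")
      case True
      then obtain k where "k < k2" "(i1, h1) \<in> S k" unfolding ordered_before_def S_def by auto
      then show ?thesis using c1 by (metis less_imp_le)
    next
      case False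
      have "h1 \<in> shardCLs ?R ?P i1"
        unfolding shardCLs_def using False inR hm_in \<open>h1 < hm\<close>
        by (auto simp: shardCLs_def)
      moreover have "ts i1 h1 \<le> ?T" using lt le2 c1 c2e unfolding blockTS_def by auto
      ultimately have "(i1, h1) \<in> S k2" using Sdef[OF k2] i1 by auto
      then show ?thesis using c1 by auto
    qed
  qed
  have inL: "cl_of x \<in> S k" if "k < K" "x \<in> set (L k)" for x k
    using Lset[OF that(1)] that(2) otxs_of_cl by fastforce
  have neq: "otx1 \<noteq> otx2" using rule by auto
  show ?thesis
  proof
    assume "otx2 \<in> set (output_log props K)"
    then obtain k2 where k2: "k2 < K" "otx2 \<in> set (L k2)" unfolding log by auto
    then obtain k1 where k1: "k1 \<le> k2" "cl_of otx1 \<in> S k1" using Key inL by blast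
    have "otx1 \<in> set (L k1)" using Lset[of k1] k1 k2 otx1_recv(2) by auto
    then have mem: "otx1 \<in> set (output_log props K)" unfolding log using k1 k2 by auto
    have ord: "p < q" if "p < length (concat (map L [0..<K]))" "q < length (concat (map L [0..<K]))"
       "concat (map L [0..<K]) ! p = otx1" "concat (map L [0..<K]) ! q = otx2" for p q
    proof (rule concat_order[OF _ _ that])
      fix k k' assume kk: "k < K" "k' < K" "otx1 \<in> set (L k)" "otx2 \<in> set (L k')"
      obtain k1 where "k1 \<le> k'" "cl_of otx1 \<in> S k1" using Key inL kk by blast
      moreover have "k1 < K" using calculation kk by linarith
      ultimately show "k \<le> k'" using D[of k k1] inL kk by fastforce
    next
      fix k i j assume h: "k < K" "i < length (L k)" "j < length (L k)" "L k ! i = otx1" "L k ! j = otx2"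
      show "i < j"
      proof (rule ccontr)
        assume "\<not> i < j"
        moreover have "i \<noteq> j" using h neq by auto
        ultimately have "j < i" by simp
        then have "order_ok ts otx2 otx1"
          using Lsort[OF h(1)] h by (metis sorted_wrt_iff_nth_less)
        then show False using rule unfolding order_ok_def by auto
      qed
    qed
    show "otx1 \<in> set (output_log props K) \<and>
           (\<forall>p q. p < length (output_log props K) \<and> q < length (output_log props K) \<and>
                  output_log props K ! p = otx1 \<and> output_log props K ! q = otx2 \<longrightarrow> p < q)"
      using mem ord unfolding log by blast
  qed
qed

end
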